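(* Let $(n,k,\mathfrak s)$ be natural numbers $n\geqslant k\geqslant 3$ and a sign $\mathfrak s\in\{+1,-1\}$ satisfying: if $k$ is odd then $\mathfrak s=+1$; $(n,k,\mathfrak s)\neq (6,6,+1)$; and $k \leqslant n/2$. Then there exist $a,b\in S_n$, both of order $k$ and both of sign $\mathfrak s$, such that $\langle a,b\rangle$ is transitive on $\{1,\dots,n\}$ and $a^{-1}b$ is a cycle (i.e. a single nontrivial cycle together with fixed points).
   Context: A permutation in $S_n$ has sign $+1$ if it is even and sign $-1$ if it is odd. *)

theory Defs
  imports "HOL-Combinatorics.Combinatorics"
begin

definition perm_order :: "(nat \<Rightarrow> nat) \<Rightarrow> nat" where
  "perm_order p = (LEAST m. m > 0 \<and> (p ^^ m) = id)"

inductive_set gen2 :: "(nat \<Rightarrow> nat) \<Rightarrow> (nat \<Rightarrow> nat) \<Rightarrow> (nat \<Rightarrow> nat) set"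
  for a b where
  gen_id: "id \<in> gen2 a b"
| gen_a: "a \<in> gen2 a b"
| gen_b: "b \<in> gen2 a b"
| gen_comp: "g \<in> gen2 a b \<Longrightarrow> h \<in> gen2 a b \<Longrightarrow> g \<circ> h \<in> gen2 a b"
| gen_inv: "g \<in> gen2 a b \<Longrightarrow> inv g \<in> gen2 a b"

definition transitive_on :: "(nat \<Rightarrow> nat) set \<Rightarrow> nat set \<Rightarrow> bool" where
  "transitive_on G S = (\<forall>i\<in>S. \<forall>j\<in>S. \<exists>g\<in>G. g i = j)"

definition is_cycle_perm :: "(nat \<Rightarrow> nat) \<Rightarrow> bool" where
  "is_cycle_perm p = (\<exists>cs. distinct cs \<and> length cs \<ge> 2 \<and> p = cycle_of_list cs)"

end

theory Submission
  imports Defs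
begin

lemma cycle_insert:
  assumes "distinct cs" "x \<in> set cs" "y \<notin> set cs"
  shows "\<exists>cs'. distinct cs' \<and> set cs' = insert y (set cs) \<and> length cs' = Suc (length cs)
           \<and> cycle_of_list cs \<circ> transpose x y = cycle_of_list cs'"
proof -
  obtain i where i: "i < length cs" "cs ! i = x" by (metis assms(2) in_set_conv_nth)
  have ne: "cs \<noteq> []" using assms(2) by auto
  have "hd (rotate i cs) = x" using hd_rotate_conv_nth[OF ne] i by simp
  moreover have "rotate i cs \<noteq> []" using ne by simp
  ultimately obtain rest where r: "rotate i cs = x # rest" by (metis list.collapse)
  have eq: "cycle_of_list cs = cycle_of_list (x # rest)"
    using cycle_of_list_rotate_independent[OF assms(1), of i] r by simp
  have d: "distinct (x # rest)" using r assms(1) by (metis distinct_rotate)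
  have st: "set (x # rest) = set cs" using r by (metis set_rotate)
  have yr: "y \<notin> set (x # rest)" using st assms(3) by simp
  have "transpose x y \<circ> cycle_of_list (x # rest) \<circ> inv (transpose x y)
        = cycle_of_list (map (transpose x y) (x # rest))"
    by (rule conjugation_of_cycle[OF d]) simp
  moreover have "map (transpose x y) (x # rest) = y # rest"
    using d yr by (auto intro!: map_idI simp: transpose_eq_iff)
  ultimately have conj: "transpose x y \<circ> cycle_of_list (x # rest) \<circ> transpose x y = cycle_of_list (y # rest)"
    by simp
  have "cycle_of_list (x # y # rest) = transpose x y \<circ> cycle_of_list (y # rest)" by simp
  also have "\<dots> = transpose x y \<circ> (transpose x y \<circ> cycle_of_list (x # rest) \<circ> transpose x y)"
    using conj by simp
  also have "\<dots> = cycle_of_list (x # rest) \<circ> transpose x y"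
    by (simp add: comp_assoc[symmetric])
  finally have "cycle_of_list cs \<circ> transpose x y = cycle_of_list (x # y # rest)" using eq by simp
  moreover have "distinct (x # y # rest)" using d yr by auto
  moreover have "set (x # y # rest) = insert y (set cs)" using st by auto
  moreover have "length (x # y # rest) = Suc (length cs)" using r by (metis length_Cons length_rotate)
  ultimately show ?thesis by blast
qed

lemma sign_cycle:
  assumes "distinct cs"
  shows "sign (cycle_of_list cs) = (-1::int) ^ (length cs - 1)"
  using assms
proof (induction cs rule: cycle_of_list.induct)
  case (1 i j cs)
  have "sign (cycle_of_list (i # j # cs)) = sign (transpose i j) * sign (cycle_of_list (j # cs))"
    by (simp add: sign_compose permutation_of_cycle permutation_swap_id)
  also have "\<dots> = - ((-1::int) ^ (length (j # cs) - 1))" using 1 by (simp add: sign_swap_id)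
  also have "\<dots> = (-1::int) ^ (length (i # j # cs) - 1)" by simp
  finally show ?case .
qed simp_all

lemma funpow_comp_commute:
  assumes "f \<circ> g = g \<circ> f"
  shows "(f \<circ> g) ^^ n = f ^^ n \<circ> g ^^ n"
proof (induction n)
  case (Suc n)
  have c: "g ^^ n \<circ> f = f \<circ> g ^^ n"
  proof (induction n)
    case (Suc n)
    have "g ^^ Suc n \<circ> f = g \<circ> (g ^^ n \<circ> f)" by (simp add: comp_assoc funpow_Suc_right)
    then show ?case using Suc assms by (metis comp_assoc funpow_Suc_right funpow.simps(2))
  qed simp
  have "(f \<circ> g) ^^ Suc n = (f \<circ> g) \<circ> (f ^^ n \<circ> g ^^ n)" using Suc by (simp only: funpow.simps(2))
  also have "\<dots> = f \<circ> (g \<circ> f ^^ n) \<circ> g ^^ n" by (simp add: comp_assoc)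
  also have "g \<circ> f ^^ n = f ^^ n \<circ> g"
  proof (induction n)
    case (Suc n)
    then show ?case using assms by (metis comp_assoc funpow_Suc_right funpow.simps(2))
  qed simp
  finally show ?case by (simp add: comp_assoc funpow_Suc_right)
qed simp

lemma funpow_conj:
  assumes "p \<circ> p = id"
  shows "(p \<circ> f \<circ> p) ^^ n = p \<circ> f ^^ n \<circ> p"
proof (induction n)
  case 0 then show ?case using assms by simp
next
  case (Suc n)
  have "(p \<circ> f \<circ> p) ^^ Suc n = (p \<circ> f \<circ> p) \<circ> (p \<circ> f ^^ n \<circ> p)" using Suc by (simp only: funpow.simps(2))
  also have "\<dots> = p \<circ> f \<circ> (p \<circ> p) \<circ> f ^^ n \<circ> p" by (simp add: comp_assoc)
  also have "\<dots> = p \<circ> f ^^ Suc n \<circ> p" using assms by (simp add: comp_assoc)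
  finally show ?case .
qed

definition reach :: "(nat\<Rightarrow>nat) \<Rightarrow> (nat\<Rightarrow>nat) \<Rightarrow> nat \<Rightarrow> nat \<Rightarrow> bool" where
  "reach a c = (\<lambda>y z. z = a y \<or> z = c y)\<^sup>*\<^sup>*"

definition config :: "nat \<Rightarrow> nat \<Rightarrow> (nat\<Rightarrow>nat) \<Rightarrow> (nat\<Rightarrow>nat) \<Rightarrow> nat list \<Rightarrow> int \<Rightarrow> nat \<Rightarrow> bool" where
  "config k m a b cs \<sigma> \<beta> \<longleftrightarrow> a permutes {1..m} \<and> b permutes {1..m} \<and> a ^^ k = id \<and> b ^^ k = id
    \<and> (\<forall>j. 0 < j \<and> j < k \<longrightarrow> a ^^ j \<noteq> id \<and> b ^^ j \<noteq> id) \<and> sign a = \<sigma> \<and> sign b = \<sigma>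
    \<and> distinct cs \<and> set cs \<subseteq> {1..m} \<and> 1 \<in> set cs \<and> length cs + \<beta> = m
    \<and> a \<circ> cycle_of_list cs = b \<and> (\<forall>y\<in>{1..m}. reach a (cycle_of_list cs) 1 y)
    \<and> (\<exists>x\<in>set cs. b x \<in> set cs \<and> b x \<noteq> x)"

lemma gen2_bij:
  assumes "bij a" "bij b" "g \<in> gen2 a b"
  shows "bij g"
  using assms(3)
proof induction
  case gen_id show ?case by (rule bij_id)
next
  case gen_a show ?case by (rule assms(1))
next
  case gen_b show ?case by (rule assms(2))
next
  case (gen_comp g h) show ?case using gen_comp by (metis bij_comp)
next
  case (gen_inv g) show ?case using bij_imp_bij_inv[OF gen_inv(2)] .
qed

lemma reach_gen2:
  assumes "bij a" "reach a (inv a \<circ> b) x y"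
  shows "\<exists>g\<in>gen2 a b. g x = y"
  using assms(2) unfolding reach_def
proof (induction rule: rtranclp_induct)
  case base
  then show ?case by (intro bexI[of _ id]) (auto intro: gen2.gen_id)
next
  case (step y z)
  then obtain g where g: "g \<in> gen2 a b" "g x = y" by blast
  have c: "inv a \<circ> b \<in> gen2 a b" by (intro gen2.gen_comp gen2.gen_inv gen2.gen_a gen2.gen_b)
  from step(2) show ?case
  proof
    assume "z = a y"
    then show ?thesis using g by (intro bexI[of _ "a \<circ> g"]) (auto intro: gen2.intros)
  next
    assume "z = (inv a \<circ> b) y"
    then show ?thesis using g c by (intro bexI[of _ "(inv a \<circ> b) \<circ> g"]) (auto intro: gen2.gen_comp)
  qed
qed

lemma perm_order_eq:
  assumes "0 < k" "a ^^ k = id" "\<forall>j. 0 < j \<and> j < k \<longrightarrow> a ^^ j \<noteq> id"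
  shows "perm_order a = k"
  unfolding perm_order_def
  by (rule Least_equality) (use assms in \<open>auto simp: not_less[symmetric]\<close>)

lemma config_final:
  assumes "config k n a b cs \<sigma> \<beta>" "0 < k"
  shows "a permutes {1..n} \<and> b permutes {1..n}
           \<and> perm_order a = k \<and> perm_order b = k
           \<and> sign a = \<sigma> \<and> sign b = \<sigma>
           \<and> transitive_on (gen2 a b) {1..n}
           \<and> is_cycle_perm (inv a \<circ> b)"
proof -
  note C = assms(1)[unfolded config_def]
  have pa: "a permutes {1..n}" and pb: "b permutes {1..n}" using C by auto
  have ba: "bij a" and bb: "bij b" using pa pb permutes_bij by blast+
  have ceq: "inv a \<circ> b = cycle_of_list cs"
  proof -
    have "inv a \<circ> b = inv a \<circ> (a \<circ> cycle_of_list cs)" using C by simp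
    also have "\<dots> = cycle_of_list cs" using ba by (simp add: comp_assoc[symmetric] bij_is_inj)
    finally show ?thesis .
  qed
  have "length cs \<ge> 2"
  proof -
    obtain x where x: "x \<in> set cs" "b x \<in> set cs" "b x \<noteq> x" using C by blast
    have "{x, b x} \<subseteq> set cs" using x by auto
    then have "card {x, b x} \<le> card (set cs)" by (intro card_mono) auto
    then show ?thesis using x C by (simp add: distinct_card)
  qed
  then have cyc: "is_cycle_perm (inv a \<circ> b)" unfolding is_cycle_perm_def using ceq C by blast
  have g: "\<exists>g\<in>gen2 a b. g 1 = y" if "y \<in> {1..n}" for y
    using reach_gen2[OF ba] that C ceq by metis
  have tr: "transitive_on (gen2 a b) {1..n}"
    unfolding transitive_on_def
  proof (intro ballI)
    fix i j assume i: "i \<in> {1..n}" and j: "j \<in> {1..n}"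
    obtain gi where gi: "gi \<in> gen2 a b" "gi 1 = i" using g i by blast
    obtain gj where gj: "gj \<in> gen2 a b" "gj 1 = j" using g j by blast
    have "bij gi" using gen2_bij[OF ba bb gi(1)] .
    then have "inv gi i = 1" using gi by (metis bij_is_inj inv_f_f)
    then show "\<exists>g\<in>gen2 a b. g i = j"
      using gi gj by (intro bexI[of _ "gj \<circ> inv gi"]) (auto intro: gen2.intros)
  qed
  show ?thesis using C tr cyc assms(2) perm_order_eq by auto
qed

lemma range_cycle_apply:
  assumes "0 < l"
  shows "cycle_of_list [m+1..<m+l+1] y = (if m+1 \<le> y \<and> y < m+l then y+1 else if y = m+l then m+1 else y)"
proof (cases "y \<in> set [m+1..<m+l+1]")
  case False
  then show ?thesis using id_outside_supp[OF False] assms by (auto simp del: upt_Suc simp add: nth_upt)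
next
  case True
  define cs where "cs = [m+1..<m+l+1]"
  have len: "length cs = l" unfolding cs_def by (simp del: upt_Suc add: nth_upt)
  define i where "i = y - (m+1)"
  have i: "i < l" "cs ! i = y" using True unfolding cs_def i_def by (auto simp del: upt_Suc simp add: nth_upt)
  have "map (cycle_of_list cs) cs = rotate 1 cs"
    using cyclic_rotation[of cs 1] unfolding cs_def by (simp del: upt_Suc add: nth_upt)
  then have "cycle_of_list cs (cs ! i) = rotate 1 cs ! i" using i len by (metis nth_map)
  also have "\<dots> = cs ! ((1 + i) mod l)" using nth_rotate[of i cs 1] i len by (simp del: upt_Suc add: nth_upt)
  finally have e: "cycle_of_list cs y = cs ! ((1 + i) mod l)" using i by (simp del: upt_Suc add: nth_upt)
  show ?thesis
  proof (cases "1 + i < l")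
    case True
    then show ?thesis using e i unfolding cs_def i_def by (auto simp del: upt_Suc simp add: nth_upt)
  next
    case False
    then have "1 + i = l" using i by linarith
    then have "(1 + i) mod l = 0" by simp
    then show ?thesis using e i False assms unfolding cs_def i_def by (auto simp del: upt_Suc simp add: nth_upt)
  qed
qed

lemma range_cycle_pow:
  assumes "j < l"
  shows "(cycle_of_list [m+1..<m+l+1] ^^ j) (m+1) = m+1+j"
proof -
  define cs where "cs = [m+1..<m+l+1]"
  have len: "length cs = l" unfolding cs_def by (simp del: upt_Suc add: nth_upt)
  have "map (cycle_of_list cs ^^ j) cs = rotate j cs"
    using cyclic_rotation[of cs j] unfolding cs_def by (simp del: upt_Suc add: nth_upt)
  moreover have "0 < length cs" using assms len by (simp del: upt_Suc add: nth_upt)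
  ultimately have "(cycle_of_list cs ^^ j) (cs ! 0) = rotate j cs ! 0" by (metis nth_map)
  also have "\<dots> = cs ! (j mod l)" using nth_rotate[of 0 cs j] assms len by (simp del: upt_Suc add: nth_upt)
  finally show ?thesis using assms unfolding cs_def by (simp del: upt_Suc add: nth_upt)
qed

lemma range_cycle_facts:
  assumes "0 < l"
  shows "cycle_of_list [m+1..<m+l+1] permutes {m+1..m+l}"
    "cycle_of_list [m+1..<m+l+1] ^^ l = id"
    "sign (cycle_of_list [m+1..<m+l+1]) = (-1::int) ^ (l - 1)"
    "permutation (cycle_of_list [m+1..<m+l+1])"
proof -
  have s: "set [m+1..<m+l+1] = {m+1..m+l}" by auto
  show "cycle_of_list [m+1..<m+l+1] permutes {m+1..m+l}" using cycle_permutes s by metis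
  have "length [m+1..<m+l+1] = l" by simp
  then show "cycle_of_list [m+1..<m+l+1] ^^ l = id" using cycle_is_id_root[of "[m+1..<m+l+1]"] distinct_upt by metis
  show "sign (cycle_of_list [m+1..<m+l+1]) = (-1::int) ^ (l - 1)" using sign_cycle[of "[m+1..<m+l+1]"] by simp
  show "permutation (cycle_of_list [m+1..<m+l+1])" by (rule permutation_of_cycle)
qed

lemma disjoint_commute:
  assumes "f permutes S" "g permutes T" "S \<inter> T = {}"
  shows "f \<circ> g = g \<circ> f"
proof
  fix y
  show "(f \<circ> g) y = (g \<circ> f) y"
  proof (cases "y \<in> S")
    case True
    have yT: "y \<notin> T" using assms(3) True by blast
    have "f y \<in> S" using permutes_in_image[OF assms(1)] True by blast
    then have fT: "f y \<notin> T" using assms(3) by blast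
    show ?thesis using permutes_not_in[OF assms(2) yT] permutes_not_in[OF assms(2) fT] by simp
  next
    case False
    then show ?thesis
    proof (cases "y \<in> T")
      case True
      have "g y \<in> T" using permutes_in_image[OF assms(2)] True by blast
      then have gS: "g y \<notin> S" using assms(3) by blast
      show ?thesis using permutes_not_in[OF assms(1) gS] permutes_not_in[OF assms(1) \<open>y \<notin> S\<close>] by simp
    next
      case False
      show ?thesis using permutes_not_in[OF assms(1) \<open>y \<notin> S\<close>] permutes_not_in[OF assms(2) False] by simp
    qed
  qed
qed

lemma disjoint_pow_id:
  assumes "f permutes S" "g permutes T" "S \<inter> T = {}" "f ^^ k = id" "g ^^ l = id" "l dvd k"
  shows "(f \<circ> g) ^^ k = id"
proof -
  obtain t where t: "k = l * t" using assms(6) by blast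
  have "g ^^ k = id" unfolding t funpow_mult[symmetric] assms(5) by (induct t) auto
  then show ?thesis using funpow_comp_commute[OF disjoint_commute[OF assms(1-3)]] assms(4) by simp
qed

lemma disjoint_pow_nid:
  assumes "f permutes S" "g permutes T" "S \<inter> T = {}" "f ^^ j \<noteq> id"
  shows "(f \<circ> g) ^^ j \<noteq> id"
proof
  assume h: "(f \<circ> g) ^^ j = id"
  obtain y where y: "(f ^^ j) y \<noteq> y" using assms(4) by (meson eq_id_iff)
  have "y \<in> S" using y permutes_not_in[OF permutes_funpow[OF assms(1)]] by metis
  then have "y \<notin> T" using assms(3) by blast
  then have "(g ^^ j) y = y" using permutes_not_in[OF permutes_funpow[OF assms(2)]] by metis
  then have "((f \<circ> g) ^^ j) y = (f ^^ j) y"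
    using funpow_comp_commute[OF disjoint_commute[OF assms(1-3)]] by simp
  then show False using h y by simp
qed

lemma conj_pow_nid:
  assumes "p \<circ> p = id" "f ^^ j \<noteq> id"
  shows "(p \<circ> f \<circ> p) ^^ j \<noteq> id"
proof
  assume "(p \<circ> f \<circ> p) ^^ j = id"
  then have "p \<circ> f ^^ j \<circ> p = id" using funpow_conj[OF assms(1)] by simp
  then have "p \<circ> (p \<circ> f ^^ j \<circ> p) \<circ> p = p \<circ> p" by simp
  have "f ^^ j = (p \<circ> p) \<circ> f ^^ j \<circ> (p \<circ> p)" using assms(1) by simp
  also have "\<dots> = p \<circ> (p \<circ> f ^^ j \<circ> p) \<circ> p" by (simp add: comp_assoc)
  also have "\<dots> = id" using \<open>p \<circ> f ^^ j \<circ> p = id\<close> assms(1) by simp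
  finally have "f ^^ j = id" .
  then show False using assms(2) by simp
qed

lemma reach_mono:
  assumes "\<And>y. reach a' c' y (a y)" "\<And>y. reach a' c' y (c y)" "reach a c s t"
  shows "reach a' c' s t"
  using assms(3) unfolding reach_def
proof (induction rule: rtranclp_induct)
  case base then show ?case by simp
next
  case (step y z)
  then have "(\<lambda>y z. z = a' y \<or> z = c' y)\<^sup>*\<^sup>* y z" using assms(1,2) unfolding reach_def by blast
  with step(3) show ?case by (rule rtranclp_trans)
qed

lemma reach_a: "reach a c y (a y)" unfolding reach_def by auto
lemma reach_c: "reach a c y (c y)" unfolding reach_def by auto
lemma reach_trans: "reach a c x y \<Longrightarrow> reach a c y z \<Longrightarrow> reach a c x z"
  unfolding reach_def by (rule rtranclp_trans)
lemma reach_refl: "reach a c y y" unfolding reach_def by auto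

lemma step2:
  assumes cfg: "config k m a b cs \<sigma> \<beta>" and l: "2 \<le> l" "l dvd k"
  shows "\<exists>a' b' cs'. config k (m+l) a' b' cs' (\<sigma> * (-1)^(l-1)) (\<beta> + (l - 2))"
proof -
  note Cf = cfg[unfolded config_def]
  have pa: "a permutes {1..m}" and pb: "b permutes {1..m}" and dcs: "distinct cs"
    and scs: "set cs \<subseteq> {1..m}" and one: "1 \<in> set cs" and len: "length cs + \<beta> = m"
    and abc: "a \<circ> cycle_of_list cs = b" and rch: "\<forall>y\<in>{1..m}. reach a (cycle_of_list cs) 1 y"
    and ak: "a ^^ k = id" and bk: "b ^^ k = id"
    and ajk: "\<forall>j. 0 < j \<and> j < k \<longrightarrow> a ^^ j \<noteq> id \<and> b ^^ j \<noteq> id"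
    and sa: "sign a = \<sigma>" and sb: "sign b = \<sigma>"
    using Cf by blast+
  obtain x where x: "x \<in> set cs" "b x \<in> set cs" "b x \<noteq> x" using Cf by blast
  define q where "q = b x"
  define c where "c = cycle_of_list cs"
  define C where "C = cycle_of_list [m+1..<m+l+1]"
  define u where "u = m+1"
  define u' where "u' = m+l"
  define \<pi> where "\<pi> = transpose q u"
  define a' where "a' = a \<circ> C"
  define b' where "b' = \<pi> \<circ> (b \<circ> C) \<circ> \<pi>"
  have l0: "0 < l" using l by simp
  have Cap: "C y = (if m+1 \<le> y \<and> y < m+l then y+1 else if y = m+l then m+1 else y)" for y
    unfolding C_def by (rule range_cycle_apply[OF l0])
  have pC: "C permutes {m+1..m+l}" "C ^^ l = id" "sign C = (-1::int)^(l-1)" "permutation C"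
    unfolding C_def using range_cycle_facts[OF l0] by auto
  have xm: "x \<in> {1..m}" "q \<in> {1..m}" using x scs q_def by auto
  have u'n: "u' \<notin> set cs" using scs l0 by (auto simp: u'_def)
  have u0n: "u \<notin> set cs" using scs by (auto simp: u_def)
  have ao: "a y = y" if "y \<notin> {1..m}" for y using permutes_not_in[OF pa that] .
  have bo: "b y = y" if "y \<notin> {1..m}" for y using permutes_not_in[OF pb that] .
  have co: "c y = y" if "y \<notin> set cs" for y unfolding c_def using id_outside_supp[OF that] .
  have bi: "b y \<in> {1..m}" if "y \<in> {1..m}" for y using permutes_in_image[OF pb] that by blast
  have ci: "c y \<in> {1..m}" if "y \<in> {1..m}" for y
  proof (cases "y \<in> set cs")
    case True
    then have "c y \<in> set cs" unfolding c_def using permutes_in_image[OF cycle_permutes[of cs], of y] by simp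
    then show ?thesis using scs by blast
  next
    case False then show ?thesis using co that by simp
  qed
  have ac: "a (c y) = b y" for y using abc unfolding c_def by (metis comp_apply)
  have binj: "y = z" if "b y = b z" for y z using permutes_inj[OF pb] that by (meson injD)
  have qx: "q \<noteq> x" using x q_def by simp
  have key: "(a' \<circ> (c \<circ> transpose x u' \<circ> transpose q u)) y = b' y" for y
  proof (cases "y \<in> {1..m}")
    case True
    have ne: "y \<noteq> u" "y \<noteq> u'" using True l0 by (auto simp: u_def u'_def)
    have Cy: "C y = y" using l0 Cap True l0 by auto
    show ?thesis
    proof (cases "y = x")
      case yx: True
      have "c u' = u'" using co[OF u'n] .
      moreover have "C u' = u" using l0 Cap by (simp add: u'_def u_def)
      moreover have "a u = u" using ao by (simp add: u_def)
      moreover have "x \<noteq> u" "u' \<noteq> q" "u \<noteq> q" using xm l by (auto simp: u_def u'_def)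
      ultimately show ?thesis using yx qx Cy
        by (simp add: a'_def b'_def \<pi>_def q_def[symmetric])
    next
      case ynx: False
      show ?thesis
      proof (cases "y = q")
        case yq: True
        have "C u = m+2" using l0 Cap l by (simp add: u_def)
        moreover have "u \<noteq> x" "u \<noteq> u'" "m+2 \<noteq> q" "m + 2 \<noteq> u" using xm l by (auto simp: u_def u'_def)
        moreover have "c u = u" using co[OF u0n] .
        ultimately show ?thesis using yq Cy ao bo
          by (simp add: a'_def b'_def \<pi>_def)
      next
        case ynq: False
        have "c y \<in> {1..m}" using ci True .
        then have "C (c y) = c y" using l0 Cap by auto
        moreover have "b y \<noteq> q" using ynx binj q_def by blast
        moreover have "b y \<noteq> u" using bi[OF True] by (auto simp: u_def)
        ultimately show ?thesis using ynx ynq ne Cy ac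
          by (simp add: a'_def b'_def \<pi>_def)
      qed
    qed
  next
    case False
    show ?thesis
    proof (cases "y = u")
      case yu: True
      have "c q \<in> {1..m}" using ci xm by blast
      then have "C (c q) = c q" using l0 Cap by auto
      moreover have "b q \<noteq> q" using binj qx q_def by metis
      moreover have "b q \<noteq> u" using bi[OF xm(2)] by (auto simp: u_def)
      moreover have "u \<noteq> u'" "q \<noteq> x" "q \<noteq> u'" using l xm qx by (auto simp: u_def u'_def)
      moreover have "C q = q" using l0 Cap xm by auto
      ultimately show ?thesis using yu ac by (simp add: a'_def b'_def \<pi>_def)
    next
      case ynu: False
      show ?thesis
      proof (cases "y = u'")
        case yu': True
        have "c x \<in> {1..m}" using ci xm by blast
        then have "C (c x) = c x" using l0 Cap by auto
        moreover have "u' \<noteq> q" "u' \<noteq> u" using l xm by (auto simp: u_def u'_def)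
        moreover have "C u' = u" using l0 Cap by (simp add: u'_def u_def)
        moreover have "b u = u" using bo by (simp add: u_def)
        ultimately show ?thesis using yu' ac by (simp add: a'_def b'_def \<pi>_def q_def)
      next
        case ynu': False
        have yq: "y \<noteq> q" "y \<noteq> x" using False xm by auto
        have "c y = y" using co False scs by blast
        moreover have Cy: "C y \<notin> {1..m}" "C y \<noteq> u" "C y \<noteq> q"
          using l0 Cap[of y] False ynu ynu' xm by (auto simp: u_def u'_def)
        ultimately show ?thesis using yq ynu ynu' False ao bo
          by (simp add: a'_def b'_def \<pi>_def)
      qed
    qed
  qed
  obtain cs1 where cs1: "distinct cs1" "set cs1 = insert u' (set cs)" "length cs1 = Suc (length cs)"
    "c \<circ> transpose x u' = cycle_of_list cs1"
    using cycle_insert[OF dcs x(1) u'n] unfolding c_def by blast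
  have qi: "q \<in> set cs1" using cs1(2) x(2) q_def by simp
  have un: "u \<notin> set cs1" using cs1(2) scs l by (auto simp: u_def u'_def)
  obtain cs2 where cs2: "distinct cs2" "set cs2 = insert u (set cs1)" "length cs2 = Suc (length cs1)"
    "cycle_of_list cs1 \<circ> transpose q u = cycle_of_list cs2"
    using cycle_insert[OF cs1(1) qi un] by blast
  have c2: "cycle_of_list cs2 = c \<circ> transpose x u' \<circ> transpose q u" using cs1(4) cs2(4) by simp
  have S: "{1..m} \<subseteq> {1..m+l}" "{m+1..m+l} \<subseteq> {1..m+l}" by auto
  have pa': "a permutes {1..m+l}" using permutes_subset[OF pa S(1)] .
  have pb': "b permutes {1..m+l}" using permutes_subset[OF pb S(1)] .
  have pC': "C permutes {1..m+l}" using permutes_subset[OF pC(1) S(2)] .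
  have pp: "\<pi> permutes {1..m+l}" unfolding \<pi>_def using xm l0 by (intro permutes_swap_id) (auto simp: u_def)
  have disj: "{1..m} \<inter> {m+1..m+l} = {}" by auto
  have ppi: "\<pi> \<circ> \<pi> = id" unfolding \<pi>_def by simp
  have P1: "a' permutes {1..m+l}" unfolding a'_def by (rule permutes_compose[OF pC' pa'])
  have pbC: "(b \<circ> C) permutes {1..m+l}" by (rule permutes_compose[OF pC' pb'])
  have P2: "b' permutes {1..m+l}" unfolding b'_def
    by (rule permutes_compose[OF pp permutes_compose[OF pbC pp]])
  have P3: "a' ^^ k = id" unfolding a'_def by (rule disjoint_pow_id[OF pa pC(1) disj ak pC(2) l(2)])
  have bCk: "(b \<circ> C) ^^ k = id" by (rule disjoint_pow_id[OF pb pC(1) disj bk pC(2) l(2)])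
  have P4: "b' ^^ k = id" unfolding b'_def funpow_conj[OF ppi] bCk using ppi by simp
  have P5: "\<forall>j. 0 < j \<and> j < k \<longrightarrow> a' ^^ j \<noteq> id \<and> b' ^^ j \<noteq> id"
  proof (intro allI impI)
    fix j assume j: "0 < j \<and> j < k"
    have "a' ^^ j \<noteq> id" unfolding a'_def using disjoint_pow_nid[OF pa pC(1) disj] ajk j by blast
    moreover have "b' ^^ j \<noteq> id" unfolding b'_def
      using conj_pow_nid[OF ppi disjoint_pow_nid[OF pb pC(1) disj]] ajk j by blast
    ultimately show "a' ^^ j \<noteq> id \<and> b' ^^ j \<noteq> id" ..
  qed
  have perma: "permutation a" using permutes_imp_permutation[OF _ pa] by simp
  have permb: "permutation b" using permutes_imp_permutation[OF _ pb] by simp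
  have permp: "permutation \<pi>" unfolding \<pi>_def by (rule permutation_swap_id)
  have P6: "sign a' = \<sigma> * (-1)^(l-1)" unfolding a'_def using sign_compose[OF perma pC(4)] sa pC(3) by simp
  have permbC: "permutation (b \<circ> C)" using permutation_compose[OF permb pC(4)] .
  have "sign b' = sign \<pi> * sign (b \<circ> C) * sign \<pi>" unfolding b'_def
    using sign_compose[OF permutation_compose[OF permp permbC] permp] sign_compose[OF permp permbC] by simp
  also have "\<dots> = sign (b \<circ> C)" by (simp add: mult.commute mult.left_commute)
  also have "\<dots> = \<sigma> * (-1)^(l-1)" using sign_compose[OF permb pC(4)] sb pC(3) by simp
  finally have P7: "sign b' = \<sigma> * (-1)^(l-1)" .
  have P8: "set cs2 \<subseteq> {1..m+l}" "1 \<in> set cs2" "length cs2 + (\<beta> + (l - 2)) = m + l"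
    using cs1 cs2 scs one len l by (auto simp: u_def u'_def)
  have P9: "a' \<circ> cycle_of_list cs2 = b'" using key c2 by (auto simp: fun_eq_iff)
  have ne: "x \<noteq> u" "q \<noteq> u'" "u \<noteq> u'" "u' \<noteq> u" "x \<noteq> u'" "q \<noteq> u" using xm l by (auto simp: u_def u'_def)
  have cu: "c u = u" "c u' = u'" using co[OF u0n] co[OF u'n] by auto
  have c2x: "cycle_of_list cs2 x = u'" "cycle_of_list cs2 u' = c x"
    "cycle_of_list cs2 q = u" "cycle_of_list cs2 u = c q"
    using c2 ne qx cu by simp_all
  have c2o: "cycle_of_list cs2 y = c y" if "y \<noteq> x" "y \<noteq> q" "y \<noteq> u" "y \<noteq> u'" for y
    using c2 that by simp
  have ea: "reach a' (cycle_of_list cs2) y (a y)" for y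
  proof (cases "y \<in> {1..m}")
    case True
    then have "a' y = a y" using l0 Cap by (auto simp: a'_def)
    then show ?thesis using reach_a by metis
  next
    case False then show ?thesis using ao reach_refl by metis
  qed
  have ec: "reach a' (cycle_of_list cs2) y (c y)" for y
  proof -
    consider "y = x" | "y = q" | "y = u" | "y = u'" | "y \<noteq> x \<and> y \<noteq> q \<and> y \<noteq> u \<and> y \<noteq> u'" by blast
    then show ?thesis
    proof cases
      case 1
      have r1: "reach a' (cycle_of_list cs2) x u'" using reach_c[of a' "cycle_of_list cs2" x] c2x(1) by simp
      have r2: "reach a' (cycle_of_list cs2) u' (c x)" using reach_c[of a' "cycle_of_list cs2" u'] c2x(2) by simp
      show ?thesis using 1 reach_trans[OF r1 r2] by simp
    next
      case 2
      have r1: "reach a' (cycle_of_list cs2) q u" using reach_c[of a' "cycle_of_list cs2" q] c2x(3) by simp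
      have r2: "reach a' (cycle_of_list cs2) u (c q)" using reach_c[of a' "cycle_of_list cs2" u] c2x(4) by simp
      show ?thesis using 2 reach_trans[OF r1 r2] by simp
    next
      case 3 then show ?thesis using co[OF u0n] reach_refl[of a' "cycle_of_list cs2" u] by simp
    next
      case 4 then show ?thesis using co[OF u'n] reach_refl[of a' "cycle_of_list cs2" u'] by simp
    next
      case 5 then show ?thesis using c2o[of y] reach_c[of a' "cycle_of_list cs2" y] by simp
    qed
  qed
  have rold: "reach a' (cycle_of_list cs2) 1 y" if "y \<in> {1..m}" for y
    using reach_mono[OF ea ec] rch that unfolding c_def by blast
  have rnew: "reach a' (cycle_of_list cs2) 1 (m+i)" if "1 \<le> i" "i \<le> l" for i
    using that
  proof (induction i)
    case 0 then show ?case by simp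
  next
    case (Suc i)
    show ?case
    proof (cases "i = 0")
      case True
      have r1: "reach a' (cycle_of_list cs2) 1 x" using rold xm by blast
      have "a' u' = u" using l0 Cap ao by (simp add: a'_def u_def u'_def)
      then have "reach a' (cycle_of_list cs2) u' u" using reach_a by metis
      then have "reach a' (cycle_of_list cs2) x u" using reach_trans reach_c c2x(1) by metis
      then show ?thesis using True reach_trans[OF r1] by (simp add: u_def)
    next
      case False
      then have ih: "reach a' (cycle_of_list cs2) 1 (m+i)" using Suc by simp
      have "a' (m+i) = m + Suc i" using l0 Cap ao False Suc.prems by (simp add: a'_def)
      then show ?thesis using reach_trans[OF ih reach_a] by metis
    qed
  qed
  have P10: "\<forall>y\<in>{1..m+l}. reach a' (cycle_of_list cs2) 1 y"
  proof
    fix y assume y: "y \<in> {1..m+l}"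
    show "reach a' (cycle_of_list cs2) 1 y"
    proof (cases "y \<le> m")
      case True then show ?thesis using rold y by simp
    next
      case False
      then show ?thesis using rnew[of "y - m"] y by simp
    qed
  qed
  have P11: "\<exists>x\<in>set cs2. b' x \<in> set cs2 \<and> b' x \<noteq> x"
  proof -
    have Cx: "C x = x" using l0 Cap xm by auto
    have "b' x = u" using Cx qx ne by (simp add: b'_def \<pi>_def q_def[symmetric])
    moreover have "x \<in> set cs2" "u \<in> set cs2" using cs1 cs2 x by auto
    moreover have "u \<noteq> x" using xm by (auto simp: u_def)
    ultimately show ?thesis by auto
  qed
  have "config k (m+l) a' b' cs2 (\<sigma> * (-1)^(l-1)) (\<beta> + (l - 2))"
    unfolding config_def using P1 P2 P3 P4 P5 P6 P7 cs2(1) P8 P9 P10 P11 by blast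
  then show ?thesis by blast
qed

lemma witness1:
  assumes cfg: "config k m a b cs \<sigma> \<beta>" and b1: "1 \<le> \<beta>"
  shows "\<exists>x\<in>set cs. b x \<notin> set cs"
proof (rule ccontr)
  note Cf = cfg[unfolded config_def]
  have pa: "a permutes {1..m}" and dcs: "distinct cs"
    and scs: "set cs \<subseteq> {1..m}" and one: "1 \<in> set cs" and len: "length cs + \<beta> = m"
    and abc: "a \<circ> cycle_of_list cs = b" and rch: "\<forall>y\<in>{1..m}. reach a (cycle_of_list cs) 1 y"
    using Cf by blast+
  assume "\<not> (\<exists>x\<in>set cs. b x \<notin> set cs)"
  then have H: "b x \<in> set cs" if "x \<in> set cs" for x using that by blast
  have surj: "cycle_of_list cs ` set cs = set cs" using cycle_is_surj[OF dcs] .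
  have "y \<in> set cs" if "reach a (cycle_of_list cs) 1 y" for y
    using that unfolding reach_def
  proof (induction rule: rtranclp_induct)
    case base then show ?case using one .
  next
    case (step y z)
    from step(2) show ?case
    proof
      assume z: "z = a y"
      obtain w where w: "w \<in> set cs" "cycle_of_list cs w = y" using surj step(3) by (metis imageE)
      have "a y = b w" using abc w(2) by (metis comp_apply)
      then show ?thesis using H[OF w(1)] z by simp
    next
      assume z: "z = cycle_of_list cs y"
      show ?thesis using z step(3) surj by blast
    qed
  qed
  then have "{1..m} \<subseteq> set cs" using rch by blast
  then have "card {1..m} \<le> card (set cs)" by (intro card_mono) auto
  then have "m \<le> length cs" using distinct_card[OF dcs] by simp
  then show False using len b1 by simp
qed

lemma step1:
  assumes cfg: "config k m a b cs \<sigma> \<beta>" and b1: "1 \<le> \<beta>"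
  shows "\<exists>b' cs'. config k (m+1) a b' cs' \<sigma> (\<beta> - 1)"
proof -
  note Cf = cfg[unfolded config_def]
  have pa: "a permutes {1..m}" and pb: "b permutes {1..m}" and dcs: "distinct cs"
    and scs: "set cs \<subseteq> {1..m}" and one: "1 \<in> set cs" and len: "length cs + \<beta> = m"
    and abc: "a \<circ> cycle_of_list cs = b" and rch: "\<forall>y\<in>{1..m}. reach a (cycle_of_list cs) 1 y"
    and ak: "a ^^ k = id" and bk: "b ^^ k = id"
    and ajk: "\<forall>j. 0 < j \<and> j < k \<longrightarrow> a ^^ j \<noteq> id \<and> b ^^ j \<noteq> id"
    and sa: "sign a = \<sigma>" and sb: "sign b = \<sigma>"
    using Cf by blast+
  obtain x where x: "x \<in> set cs" "b x \<notin> set cs" using witness1[OF cfg b1] by blast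
  define q where "q = b x"
  define c where "c = cycle_of_list cs"
  define z where "z = m + 1"
  define \<pi> where "\<pi> = transpose q z"
  define b' where "b' = \<pi> \<circ> b \<circ> \<pi>"
  have xm: "x \<in> {1..m}" using x scs by auto
  have bi: "b y \<in> {1..m}" if "y \<in> {1..m}" for y using permutes_in_image[OF pb] that by blast
  have qm: "q \<in> {1..m}" using bi[OF xm] q_def by simp
  have qn: "q \<notin> set cs" using x q_def by simp
  have qx: "q \<noteq> x" using x qn by auto
  have zn: "z \<notin> set cs" using scs by (auto simp: z_def)
  have zne: "z \<noteq> x" "z \<noteq> q" using xm qm by (auto simp: z_def)
  have ao: "a y = y" if "y \<notin> {1..m}" for y using permutes_not_in[OF pa that] .
  have bo: "b y = y" if "y \<notin> {1..m}" for y using permutes_not_in[OF pb that] .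
  have co: "c y = y" if "y \<notin> set cs" for y unfolding c_def using id_outside_supp[OF that] .
  have ac: "a (c y) = b y" for y using abc unfolding c_def by (metis comp_apply)
  have binj: "y = w" if "b y = b w" for y w using permutes_inj[OF pb] that by (meson injD)
  have key: "(a \<circ> (c \<circ> transpose x z \<circ> transpose z q)) y = b' y" for y
  proof -
    consider "y = x" | "y = z" | "y = q" | "y \<noteq> x \<and> y \<noteq> z \<and> y \<noteq> q" by blast
    then show ?thesis
    proof cases
      case 1
      have "c z = z" using co[OF zn] .
      moreover have "a z = z" using ao by (simp add: z_def)
      ultimately show ?thesis using 1 zne qx by (simp add: b'_def \<pi>_def q_def[symmetric])
    next
      case 2
      have "c q = q" using co[OF qn] .
      then have aq: "a q = b q" using ac[of q] by simp
      have "b q \<noteq> q" using binj qx q_def by metis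
      moreover have "b q \<noteq> z" using bi[OF qm] by (auto simp: z_def)
      ultimately show ?thesis using 2 zne qx \<open>c q = q\<close> aq by (simp add: b'_def \<pi>_def)
    next
      case 3
      have "b z = z" using bo by (simp add: z_def)
      then show ?thesis using 3 zne qx ac[of x] by (simp add: b'_def \<pi>_def q_def)
    next
      case 4
      have "b y \<noteq> q" using 4 binj q_def by blast
      moreover have "b y \<noteq> z"
      proof (cases "y \<in> {1..m}")
        case True then show ?thesis using bi[OF True] by (auto simp: z_def)
      next
        case False then show ?thesis using bo[OF False] 4 by simp
      qed
      ultimately show ?thesis using 4 ac[of y] by (simp add: b'_def \<pi>_def)
    qed
  qed
  obtain cs1 where cs1: "distinct cs1" "set cs1 = insert z (set cs)" "length cs1 = Suc (length cs)"
    "c \<circ> transpose x z = cycle_of_list cs1"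
    using cycle_insert[OF dcs x(1) zn] unfolding c_def by blast
  have zi: "z \<in> set cs1" using cs1(2) by simp
  have qn1: "q \<notin> set cs1" using cs1(2) qn zne by auto
  obtain cs2 where cs2: "distinct cs2" "set cs2 = insert q (set cs1)" "length cs2 = Suc (length cs1)"
    "cycle_of_list cs1 \<circ> transpose z q = cycle_of_list cs2"
    using cycle_insert[OF cs1(1) zi qn1] by blast
  have c2: "cycle_of_list cs2 = c \<circ> transpose x z \<circ> transpose z q" using cs1(4) cs2(4) by simp
  have S: "{1..m} \<subseteq> {1..m+1}" by auto
  have pa': "a permutes {1..m+1}" using permutes_subset[OF pa S] .
  have pb': "b permutes {1..m+1}" using permutes_subset[OF pb S] .
  have pp: "\<pi> permutes {1..m+1}" unfolding \<pi>_def using qm by (intro permutes_swap_id) (auto simp: z_def)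
  have ppi: "\<pi> \<circ> \<pi> = id" unfolding \<pi>_def by simp
  have P2: "b' permutes {1..m+1}" unfolding b'_def
    by (rule permutes_compose[OF pp permutes_compose[OF pb' pp]])
  have P4: "b' ^^ k = id" unfolding b'_def funpow_conj[OF ppi] bk using ppi by simp
  have P5: "\<forall>j. 0 < j \<and> j < k \<longrightarrow> a ^^ j \<noteq> id \<and> b' ^^ j \<noteq> id"
    unfolding b'_def using conj_pow_nid[OF ppi] ajk by blast
  have permb: "permutation b" using permutes_imp_permutation[OF _ pb] by simp
  have permp: "permutation \<pi>" unfolding \<pi>_def by (rule permutation_swap_id)
  have "sign b' = sign \<pi> * sign b * sign \<pi>" unfolding b'_def
    using sign_compose[OF permutation_compose[OF permp permb] permp] sign_compose[OF permp permb] by simp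
  also have "\<dots> = sign b" by (simp add: mult.commute mult.left_commute)
  finally have P7: "sign b' = \<sigma>" using sb by simp
  have P8: "set cs2 \<subseteq> {1..m+1}" "1 \<in> set cs2" "length cs2 + (\<beta> - 1) = m + 1"
    using cs1 cs2 scs one len b1 qm by (auto simp: z_def)
  have P9: "a \<circ> cycle_of_list cs2 = b'" using key c2 by (auto simp: fun_eq_iff)
  have c2x: "cycle_of_list cs2 x = z" "cycle_of_list cs2 z = q" "cycle_of_list cs2 q = c x"
    using c2 zne qx co[OF zn] co[OF qn] by simp_all
  have c2o: "cycle_of_list cs2 y = c y" if "y \<noteq> x" "y \<noteq> q" "y \<noteq> z" for y
    using c2 that by simp
  have ec: "reach a (cycle_of_list cs2) y (c y)" for y
  proof -
    consider "y = x" | "y = q" | "y = z" | "y \<noteq> x \<and> y \<noteq> q \<and> y \<noteq> z" by blast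
    then show ?thesis
    proof cases
      case 1
      have r1: "reach a (cycle_of_list cs2) x z" using reach_c[of a "cycle_of_list cs2" x] c2x(1) by simp
      have r2: "reach a (cycle_of_list cs2) z q" using reach_c[of a "cycle_of_list cs2" z] c2x(2) by simp
      have r3: "reach a (cycle_of_list cs2) q (c x)" using reach_c[of a "cycle_of_list cs2" q] c2x(3) by simp
      show ?thesis using 1 reach_trans[OF reach_trans[OF r1 r2] r3] by simp
    next
      case 2 then show ?thesis using co[OF qn] reach_refl[of a "cycle_of_list cs2" q] by simp
    next
      case 3 then show ?thesis using co[OF zn] reach_refl[of a "cycle_of_list cs2" z] by simp
    next
      case 4 then show ?thesis using c2o[of y] reach_c[of a "cycle_of_list cs2" y] by simp
    qed
  qed
  have rold: "reach a (cycle_of_list cs2) 1 y" if "y \<in> {1..m}" for y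
    using reach_mono[OF reach_a ec] rch that unfolding c_def by blast
  have P10: "\<forall>y\<in>{1..m+1}. reach a (cycle_of_list cs2) 1 y"
  proof
    fix y assume y: "y \<in> {1..m+1}"
    show "reach a (cycle_of_list cs2) 1 y"
    proof (cases "y \<le> m")
      case True then show ?thesis using rold y by simp
    next
      case False
      then have yz: "y = z" using y by (simp add: z_def)
      have "reach a (cycle_of_list cs2) 1 x" using rold xm by blast
      then show ?thesis using yz reach_trans reach_c[of a "cycle_of_list cs2" x] c2x(1) by metis
    qed
  qed
  have P11: "\<exists>x\<in>set cs2. b' x \<in> set cs2 \<and> b' x \<noteq> x"
  proof -
    have "b' x = z" using qx zne by (simp add: b'_def \<pi>_def q_def[symmetric])
    moreover have "x \<in> set cs2" "z \<in> set cs2" using cs1 cs2 x by auto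
    ultimately show ?thesis using zne by auto
  qed
  have "config k (m+1) a b' cs2 \<sigma> (\<beta> - 1)"
    unfolding config_def using pa' P2 ak P4 P5 sa P7 cs2(1) P8 P9 P10 P11 by blast
  then show ?thesis by blast
qed

lemma reach_pow: "reach a c y ((a ^^ j) y)"
proof (induction j)
  case 0 then show ?case using reach_refl by simp
next
  case (Suc j)
  then show ?case using reach_trans[OF Suc reach_a[of a c "(a ^^ j) y"]] by simp
qed

lemma base3:
  assumes k: "3 \<le> k"
  shows "\<exists>a b cs. config k k a b cs ((-1)^(k-1)) (k-3)"
proof -
  define a where "a = cycle_of_list [0+1..<0+k+1]"
  define \<pi> where "\<pi> = transpose (2::nat) 3"
  define b where "b = \<pi> \<circ> a \<circ> \<pi>"
  have k0: "0 < k" using k by simp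
  have Aap: "a y = (if 0+1 \<le> y \<and> y < 0+k then y+1 else if y = 0+k then 0+1 else y)" for y
    unfolding a_def by (rule range_cycle_apply[OF k0])
  have Aap': "a y = (if 1 \<le> y \<and> y < k then y+1 else if y = k then 1 else y)" for y
    using Aap[of y] by simp
  note F = range_cycle_facts[OF k0, of 0, folded a_def]
  have pa: "a permutes {1..k}" using F(1) by simp
  have ppi: "\<pi> \<circ> \<pi> = id" unfolding \<pi>_def by simp
  have pp: "\<pi> permutes {1..k}" unfolding \<pi>_def using k by (intro permutes_swap_id) auto
  have pb: "b permutes {1..k}" unfolding b_def
    by (rule permutes_compose[OF pp permutes_compose[OF pa pp]])
  have ak: "a ^^ k = id" using F(2) .
  have bk: "b ^^ k = id" unfolding b_def funpow_conj[OF ppi] ak using ppi by simp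
  have ajk: "a ^^ j \<noteq> id" if "0 < j" "j < k" for j
  proof
    assume "a ^^ j = id"
    moreover have "(a ^^ j) (0+1) = 0+1+j" unfolding a_def by (rule range_cycle_pow[OF that(2)])
    ultimately show False using that by simp
  qed
  have bjk: "b ^^ j \<noteq> id" if "0 < j" "j < k" for j
    unfolding b_def using conj_pow_nid[OF ppi ajk[OF that]] .
  have sa: "sign a = (-1)^(k-1)" using F(3) by simp
  have permp: "permutation \<pi>" unfolding \<pi>_def by (rule permutation_swap_id)
  have "sign b = sign \<pi> * sign a * sign \<pi>" unfolding b_def
    using sign_compose[OF permutation_compose[OF permp F(4)] permp] sign_compose[OF permp F(4)] by simp
  also have "\<dots> = sign a" by (simp add: mult.commute mult.left_commute)
  finally have sb: "sign b = (-1)^(k-1)" using sa by simp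
  have cyc: "cycle_of_list [1,2,3] y = (if y = 1 then 2 else if y = 2 then 3 else if y = 3 then 1 else (y::nat))" for y
    by (simp add: transpose_def)
  have key: "(a \<circ> cycle_of_list [1,2,3]) y = b y" for y
  proof -
    have e: "(a \<circ> cycle_of_list [1,2,3]) y = a (if y = 1 then 2 else if y = 2 then 3 else if y = 3 then 1 else (y::nat))"
      by (simp only: comp_apply cyc)
    consider "y = 1" | "y = 2" | "y = 3" | "y \<noteq> 1 \<and> y \<noteq> 2 \<and> y \<noteq> 3" by blast
    then show ?thesis
    proof cases
      case 1 then show ?thesis using k e by (simp add: Aap' b_def \<pi>_def transpose_def)
    next
      case 2 then show ?thesis using k e by (simp add: Aap' b_def \<pi>_def transpose_def)
    next
      case 3 then show ?thesis using k e by (simp add: Aap' b_def \<pi>_def transpose_def)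
    next
      case 4
      have "a y \<noteq> 2" "a y \<noteq> 3" using 4 k by (auto simp: Aap')
      then show ?thesis using 4 e by (simp add: b_def \<pi>_def)
    qed
  qed
  have P10: "\<forall>y\<in>{1..k}. reach a (cycle_of_list [1,2,3]) 1 y"
  proof
    fix y :: nat assume y: "y \<in> {1..k}"
    have "(a ^^ (y-1)) (0+1) = 0+1+(y-1)" unfolding a_def by (rule range_cycle_pow) (use y in auto)
    then have "(a ^^ (y-1)) 1 = y" using y by simp
    then show "reach a (cycle_of_list [1,2,3]) 1 y" using reach_pow by metis
  qed
  have b1: "b 1 = 3" using k by (simp add: b_def \<pi>_def Aap' transpose_def)
  have "config k k a b [1,2,3] ((-1)^(k-1)) (k-3)"
    unfolding config_def using pa pb ak bk ajk bjk sa sb P10 b1 k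
    by (auto simp: fun_eq_iff key[simplified])
  then show ?thesis by blast
qed

lemma base5:
  "\<exists>a b cs. config 3 5 a b cs 1 0"
proof -
  define a where "a = cycle_of_list [0+1..<0+3+1]"
  define b where "b = cycle_of_list [2+1..<2+3+1]"
  have l0: "0 < (3::nat)" by simp
  have Aap: "a y = (if 1 \<le> y \<and> y < 3 then y+1 else if y = 3 then 1 else y)" for y
    using range_cycle_apply[OF l0, of 0 y] unfolding a_def by simp
  have Bap: "b y = (if 3 \<le> y \<and> y < 5 then y+1 else if y = 5 then 3 else y)" for y
    using range_cycle_apply[OF l0, of 2 y] unfolding b_def by simp
  note Fa = range_cycle_facts[OF l0, of 0, folded a_def]
  note Fb = range_cycle_facts[OF l0, of 2, folded b_def]
  have pa: "a permutes {1..5}" using permutes_subset[OF Fa(1)] by simp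
  have pb: "b permutes {1..5}" using permutes_subset[OF Fb(1)] by simp
  have ajk: "a ^^ j \<noteq> id \<and> b ^^ j \<noteq> id" if "0 < j" "j < 3" for j
  proof
    show "a ^^ j \<noteq> id"
    proof
      assume "a ^^ j = id"
      moreover have "(a ^^ j) (0+1) = 0+1+j" unfolding a_def by (rule range_cycle_pow[OF that(2)])
      ultimately show False using that by simp
    qed
    show "b ^^ j \<noteq> id"
    proof
      assume "b ^^ j = id"
      moreover have "(b ^^ j) (2+1) = 2+1+j" unfolding b_def by (rule range_cycle_pow[OF that(2)])
      ultimately show False using that by simp
    qed
  qed
  have cyc: "cycle_of_list [3,4,5,2,1] y = (if y = 3 then 4 else if y = 4 then 5 else if y = 5 then 2
      else if y = 2 then 1 else if y = 1 then 3 else (y::nat))" for y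
    by (simp add: transpose_def)
  have key: "(a \<circ> cycle_of_list [3,4,5,2,1]) y = b y" for y
  proof -
    have e: "(a \<circ> cycle_of_list [3,4,5,2,1]) y = a (if y = 3 then 4 else if y = 4 then 5 else if y = 5 then 2
      else if y = 2 then 1 else if y = 1 then 3 else (y::nat))" by (simp only: comp_apply cyc)
    consider "y=1"|"y=2"|"y=3"|"y=4"|"y=5"|"y \<noteq> 1 \<and> y \<noteq> 2 \<and> y \<noteq> 3 \<and> y \<noteq> 4 \<and> y \<noteq> 5" by blast
    then show ?thesis using e by cases (simp_all add: Aap Bap)
  qed
  have P10: "\<forall>y\<in>{1..5}. reach a (cycle_of_list [3,4,5,2,1]) 1 (y::nat)"
  proof
    fix y :: nat assume y: "y \<in> {1..5}"
    let ?c = "cycle_of_list [3,4,5,2,1::nat]"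
    have r13: "reach a ?c 1 3" using reach_c[of a ?c 1] by (simp add: cyc)
    have r34: "reach a ?c 3 4" using reach_c[of a ?c 3] by (simp add: cyc)
    have r45: "reach a ?c 4 5" using reach_c[of a ?c 4] by (simp add: cyc)
    have r52: "reach a ?c 5 2" using reach_c[of a ?c 5] by (simp add: cyc)
    have "y = 1 \<or> y = 2 \<or> y = 3 \<or> y = 4 \<or> y = 5" using y by auto
    then show "reach a ?c 1 y"
      using reach_refl[of a ?c 1] r13 reach_trans[OF r13 r34] reach_trans[OF reach_trans[OF r13 r34] r45]
        reach_trans[OF reach_trans[OF reach_trans[OF r13 r34] r45] r52] by auto
  qed
  have "config 3 5 a b [3,4,5,2,1] 1 0"
    unfolding config_def using pa pb Fa(2) Fb(2) ajk Fa(3) Fb(3) P10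
    by (auto simp: fun_eq_iff key[simplified] Bap)
  then show ?thesis by blast
qed

lemma iter2:
  assumes "config k m a b cs \<sigma> \<beta>" "2 \<le> l" "l dvd k"
  shows "\<exists>a b cs. config k (m + j*l) a b cs (\<sigma> * ((-1)^(l-1))^j) (\<beta> + j*(l-2))"
proof (induction j)
  case 0 then show ?case using assms(1) by auto
next
  case (Suc j)
  then obtain a b cs where "config k (m + j*l) a b cs (\<sigma> * ((-1)^(l-1))^j) (\<beta> + j*(l-2))" by blast
  from step2[OF this assms(2,3)] obtain a' b' cs' where
    "config k (m + j*l + l) a' b' cs' (\<sigma> * ((-1)^(l-1))^j * (-1)^(l-1)) (\<beta> + j*(l-2) + (l-2))" by blast
  moreover have "m + j*l + l = m + Suc j * l" by simp
  moreover have "\<beta> + j*(l-2) + (l-2) = \<beta> + Suc j * (l-2)" by simp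
  moreover have "\<sigma> * ((-1::int)^(l-1))^j * (-1)^(l-1) = \<sigma> * ((-1)^(l-1))^Suc j" by (simp add: mult.assoc mult.commute)
  ultimately show ?case by metis
qed

lemma iter1:
  assumes "config k m a b cs \<sigma> \<beta>"
  shows "j \<le> \<beta> \<Longrightarrow> \<exists>a b cs. config k (m + j) a b cs \<sigma> (\<beta> - j)"
proof (induction j)
  case 0 then show ?case using assms by auto
next
  case (Suc j)
  then obtain a b cs where c: "config k (m + j) a b cs \<sigma> (\<beta> - j)" by auto
  have "1 \<le> \<beta> - j" using Suc.prems by simp
  from step1[OF c this] obtain b' cs' where "config k (m + j + 1) a b' cs' \<sigma> (\<beta> - j - 1)" by blast
  moreover have "m + j + 1 = m + Suc j" "\<beta> - j - 1 = \<beta> - Suc j" by simp_all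
  ultimately show ?case by metis
qed

theorem claim2p4:
  fixes n k :: nat and s :: int
  assumes "s \<in> {1, -1}"
    and "3 \<le> k" and "k \<le> n"
    and "odd k \<longrightarrow> s = 1"
    and "(n, k, s) \<noteq> (6, 6, 1)"
    and "2 * k \<le> n"
  shows "\<exists>a b. a permutes {1..n} \<and> b permutes {1..n}
           \<and> perm_order a = k \<and> perm_order b = k
           \<and> sign a = s \<and> sign b = s
           \<and> transitive_on (gen2 a b) {1..n}
           \<and> is_cycle_perm (inv a \<circ> b)"
proof -
  have k0: "0 < k" using assms(2) by simp
  define q where "q = n div k"
  define r where "r = n mod k"
  have nq: "n = q * k + r" unfolding q_def r_def by simp
  have rk: "r < k" unfolding r_def using k0 by simp
  have q2: "2 \<le> q"
  proof (rule ccontr)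
    assume "\<not> 2 \<le> q"
    then have "q \<le> 1" by simp
    then have "q * k \<le> 1 * k" by (rule mult_le_mono1)
    then show False using assms(6) nq rk by linarith
  qed
  obtain q' where q': "q = q' + 2" using q2 by (metis add.commute le_Suc_ex)
  have "\<exists>a b cs \<beta>. config k n a b cs s \<beta>"
  proof (cases "k = 3 \<and> r = 2")
    case True
    then have s1: "s = 1" using assms(4) by simp
    obtain a b cs where c: "config 3 5 a b cs 1 0" using base5 by blast
    from iter2[OF c, of 3 "q - 1"] obtain a b cs where
      "config 3 (5 + (q-1)*3) a b cs (1 * ((-1)^(3-1))^(q-1)) (0 + (q-1)*(3-2))" by auto
    moreover have "5 + (q-1)*3 = n" using nq True q2 by (simp add: algebra_simps)
    ultimately show ?thesis using True s1 by auto
  next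
    case notA: False
    obtain a0 b0 cs0 where c0: "config k k a0 b0 cs0 ((-1)^(k-1)) (k-3)" using base3[OF assms(2)] by blast
    show ?thesis
    proof (cases "s = ((-1)^(k-1))^q")
      case True
      from iter2[OF c0, of k "q - 1"] assms(2) obtain a b cs where
        c1: "config k (k + (q-1)*k) a b cs ((-1)^(k-1) * ((-1)^(k-1))^(q-1)) (k - 3 + (q-1)*(k-2))" by auto
      have rb: "r \<le> k - 3 + (q-1)*(k-2)"
      proof (cases "k = 3")
        case True then show ?thesis using notA rk q2 by auto
      next
        case False
        then have "k - 1 \<le> k - 3 + (k - 2)" using assms(2) by simp
        also have "\<dots> \<le> k - 3 + (q-1)*(k-2)"
        proof -
          have "1*(k-2) \<le> (q-1)*(k-2)" by (rule mult_le_mono1) (use q2 in simp)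
          then show ?thesis by simp
        qed
        finally show ?thesis using rk by simp
      qed
      from iter1[OF c1 rb] obtain a b cs where
        "config k (k + (q-1)*k + r) a b cs ((-1)^(k-1) * ((-1)^(k-1))^(q-1)) (k - 3 + (q-1)*(k-2) - r)" by blast
      moreover have "k + (q-1)*k + r = n" using nq q2 by (simp add: algebra_simps q')
      moreover have "(-1::int)^(k-1) * ((-1)^(k-1))^(q-1) = ((-1)^(k-1))^q" using q' by simp
      ultimately show ?thesis using True by metis
    next
      case False
      have ke: "even k"
      proof (rule ccontr)
        assume ok: "odd k"
        then have "s = 1" using assms(4) by simp
        moreover have "even (k-1)" using ok assms(2) by presburger
        then have "(-1::int)^(k-1) = 1" by (rule neg_one_even_power)
        ultimately show False using False by simp
      qed
      have "odd (k-1)" using ke assms(2) by presburger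
      then have e: "(-1::int)^(k-1) = -1" by (rule neg_one_odd_power)
      have k4: "4 \<le> k" using ke assms(2) by presburger
      have sq: "s = - ((-1)^q)" using False e assms(1) by (cases "even q") auto
      show ?thesis
      proof (cases "2 \<le> r")
        case True
        from iter2[OF c0, of k "q - 1"] assms(2) obtain a b cs where
          c1: "config k (k + (q-1)*k) a b cs ((-1)^(k-1) * ((-1)^(k-1))^(q-1)) (k - 3 + (q-1)*(k-2))" by auto
        from iter2[OF c1, of 2 1] ke obtain a b cs where
          c2: "config k (k + (q-1)*k + 1*2) a b cs ((-1)^(k-1) * ((-1)^(k-1))^(q-1) * ((-1)^(2-1))^1) (k - 3 + (q-1)*(k-2) + 1*(2-2))"
          by auto
        have rb: "r - 2 \<le> k - 3 + (q-1)*(k-2) + 1*(2-2)" using rk by simp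
        from iter1[OF c2 rb] obtain a b cs \<beta> where
          "config k (k + (q-1)*k + 1*2 + (r-2)) a b cs ((-1)^(k-1) * ((-1)^(k-1))^(q-1) * ((-1)^(2-1))^1) \<beta>" by blast
        moreover have "k + (q-1)*k + 1*2 + (r-2) = n" using nq q2 True by (simp add: algebra_simps q')
        moreover have "(-1::int)^(k-1) * ((-1)^(k-1))^(q-1) * ((-1)^(2-1))^1 = s" using e sq q' by simp
        ultimately show ?thesis by metis
      next
        case False
        from iter2[OF c0, of k "q - 2"] assms(2) obtain a b cs where
          c1: "config k (k + (q-2)*k) a b cs ((-1)^(k-1) * ((-1)^(k-1))^(q-2)) (k - 3 + (q-2)*(k-2))" by auto
        from iter2[OF c1, of 2 2] ke obtain a b cs where
          c2: "config k (k + (q-2)*k + 2*2) a b cs ((-1)^(k-1) * ((-1)^(k-1))^(q-2) * ((-1)^(2-1))^2) (k - 3 + (q-2)*(k-2) + 2*(2-2))"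
          by auto
        have rb: "k + r - 4 \<le> k - 3 + (q-2)*(k-2) + 2*(2-2)" using False by simp
        from iter1[OF c2 rb] obtain a b cs \<beta> where
          "config k (k + (q-2)*k + 2*2 + (k + r - 4)) a b cs ((-1)^(k-1) * ((-1)^(k-1))^(q-2) * ((-1)^(2-1))^2) \<beta>" by blast
        moreover have "k + (q-2)*k + 2*2 + (k + r - 4) = n" using nq q2 k4 by (simp add: algebra_simps q')
        moreover have "(-1::int)^(k-1) * ((-1)^(k-1))^(q-2) * ((-1)^(2-1))^2 = s" using e sq q' by simp
        ultimately show ?thesis by metis
      qed
    qed
  qed
  then obtain a b cs \<beta> where "config k n a b cs s \<beta>" by blast
  from config_final[OF this k0] show ?thesis by blast
qed

end
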